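(* Under the standing assumptions of the context, $\|m_l'-(m^M)'\|_C=O(\mu(l))$ as $l\to\infty$.
   Context: Let $\theta$ be odd, non-decreasing, $C^2$, with $\theta(\omega)=\pi/4$ for $\omega>\pi/3$; fix $\pi/3\le\omega_0<\pi/2$. Meyer scaling function (Fourier transform): $\widehat{\varphi^M}(\omega)=1$ for $|\omega|\le2\omega_0$, $=\cos(\frac\pi4+\theta(\frac{\pi}{3(\pi-2\omega_0)}(|\omega|-\pi)))$ for $2\omega_0<|\omega|\le2\pi-2\omega_0$, $=0$ otherwise. Meyer mask: $2\pi$-periodic $m^M$ with $m^M(\omega)=\widehat{\varphi^M}(2\omega)$ on $[-\pi,\pi]$. $\|\cdot\|_C$: sup norm on $[-\pi,\pi]$. A linear method of summation $(\lambda_{n,k})$ maps $f$ with Fourier coefficients $a_k,b_k$ to $u_n(f,\omega)=\frac{a_0}2+\sum_{k=1}^n\lambda_{n,k}(a_k\cos k\omega+b_k\sin k\omega)$. $m^M_l:=m^M/(\cos\frac\omega2)^{2l}$. Standing assumptions: a method and a sequence $n(l)$ are fixed with $u_l:=u_{n(l)}(m^M_l,\cdot)$, $u_{1,l}:=u_{n(l)}((m^M_l)',\cdot)$ satisfying $\alpha(l):=\|u_l-m^M_l\|_C=o(l^{-1})$, $\gamma(l):=\|u_{1,l}-(m^M_l)'\|_C=o(1)$, $u_l(\pi)\ne0$; $l_0$ is fixed with $\inf_{l\ge l_0}|u_l(0)|>0$ and $l\ge l_0$. $\mu(l):=l\alpha(l)+\gamma(l)$. $m_l(\omega):=(\cos\frac\omega2)^{2l}u_l(\omega)/u_l(0)$.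 *)

theory Defs
  imports "HOL-Analysis.Analysis" "HOL-Library.Landau_Symbols"
begin

definition meyer_phi :: "(real \<Rightarrow> real) \<Rightarrow> real \<Rightarrow> real \<Rightarrow> real" where
  "meyer_phi \<theta> \<omega>0 \<omega> =
     (if \<bar>\<omega>\<bar> \<le> 2 * \<omega>0 then 1
      else if \<bar>\<omega>\<bar> \<le> 2 * pi - 2 * \<omega>0
        then cos (pi / 4 + \<theta> (pi / (3 * (pi - 2 * \<omega>0)) * (\<bar>\<omega>\<bar> - pi)))
      else 0)"

text \<open>Meyer mask: the 2pi-periodic function equal to meyer_phi(2 w) on [-pi,pi].
  The argument is reduced to [-pi,pi); at w = pi both conventions give 0.\<close>
definition meyer_mask :: "(real \<Rightarrow> real) \<Rightarrow> real \<Rightarrow> real \<Rightarrow> real" where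
  "meyer_mask \<theta> \<omega>0 \<omega> =
     meyer_phi \<theta> \<omega>0 (2 * (\<omega> - 2 * pi * of_int \<lfloor>(\<omega> + pi) / (2 * pi)\<rfloor>))"

definition meyer_mask_l :: "(real \<Rightarrow> real) \<Rightarrow> real \<Rightarrow> nat \<Rightarrow> real \<Rightarrow> real" where
  "meyer_mask_l \<theta> \<omega>0 l \<omega> = meyer_mask \<theta> \<omega>0 \<omega> / (cos (\<omega> / 2)) ^ (2 * l)"

definition fourier_a :: "(real \<Rightarrow> real) \<Rightarrow> nat \<Rightarrow> real" where
  "fourier_a f k = integral {-pi..pi} (\<lambda>t. f t * cos (real k * t)) / pi"

definition fourier_b :: "(real \<Rightarrow> real) \<Rightarrow> nat \<Rightarrow> real" where
  "fourier_b f k = integral {-pi..pi} (\<lambda>t. f t * sin (real k * t)) / pi"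

definition summation_mean :: "(nat \<Rightarrow> nat \<Rightarrow> real) \<Rightarrow> nat \<Rightarrow> (real \<Rightarrow> real) \<Rightarrow> real \<Rightarrow> real" where
  "summation_mean lam n f \<omega> = fourier_a f 0 / 2 +
     (\<Sum>k=1..n. lam n k * (fourier_a f k * cos (real k * \<omega>) + fourier_b f k * sin (real k * \<omega>)))"

definition supC :: "(real \<Rightarrow> real) \<Rightarrow> real" where
  "supC g = (SUP \<omega>\<in>{-pi..pi}. \<bar>g \<omega>\<bar>)"

definition u_l :: "(real \<Rightarrow> real) \<Rightarrow> real \<Rightarrow> (nat \<Rightarrow> nat \<Rightarrow> real) \<Rightarrow> (nat \<Rightarrow> nat) \<Rightarrow> nat \<Rightarrow> real \<Rightarrow> real" where
  "u_l \<theta> \<omega>0 lam n l = summation_mean lam (n l) (meyer_mask_l \<theta> \<omega>0 l)"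

definition u1_l :: "(real \<Rightarrow> real) \<Rightarrow> real \<Rightarrow> (nat \<Rightarrow> nat \<Rightarrow> real) \<Rightarrow> (nat \<Rightarrow> nat) \<Rightarrow> nat \<Rightarrow> real \<Rightarrow> real" where
  "u1_l \<theta> \<omega>0 lam n l = summation_mean lam (n l) (deriv (meyer_mask_l \<theta> \<omega>0 l))"

definition alpha_l :: "(real \<Rightarrow> real) \<Rightarrow> real \<Rightarrow> (nat \<Rightarrow> nat \<Rightarrow> real) \<Rightarrow> (nat \<Rightarrow> nat) \<Rightarrow> nat \<Rightarrow> real" where
  "alpha_l \<theta> \<omega>0 lam n l = supC (\<lambda>\<omega>. u_l \<theta> \<omega>0 lam n l \<omega> - meyer_mask_l \<theta> \<omega>0 l \<omega>)"

definition gamma_l :: "(real \<Rightarrow> real) \<Rightarrow> real \<Rightarrow> (nat \<Rightarrow> nat \<Rightarrow> real) \<Rightarrow> (nat \<Rightarrow> nat) \<Rightarrow> nat \<Rightarrow> real" where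
  "gamma_l \<theta> \<omega>0 lam n l = supC (\<lambda>\<omega>. u1_l \<theta> \<omega>0 lam n l \<omega> - deriv (meyer_mask_l \<theta> \<omega>0 l) \<omega>)"

definition mu_l :: "(real \<Rightarrow> real) \<Rightarrow> real \<Rightarrow> (nat \<Rightarrow> nat \<Rightarrow> real) \<Rightarrow> (nat \<Rightarrow> nat) \<Rightarrow> nat \<Rightarrow> real" where
  "mu_l \<theta> \<omega>0 lam n l = real l * alpha_l \<theta> \<omega>0 lam n l + gamma_l \<theta> \<omega>0 lam n l"

definition m_l :: "(real \<Rightarrow> real) \<Rightarrow> real \<Rightarrow> (nat \<Rightarrow> nat \<Rightarrow> real) \<Rightarrow> (nat \<Rightarrow> nat) \<Rightarrow> nat \<Rightarrow> real \<Rightarrow> real" where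
  "m_l \<theta> \<omega>0 lam n l \<omega> = (cos (\<omega> / 2)) ^ (2 * l) * u_l \<theta> \<omega>0 lam n l \<omega> / u_l \<theta> \<omega>0 lam n l 0"

end

theory Submission
  imports Defs
begin


lemma fourier_deriv:
  fixes f f' :: "real \<Rightarrow> real" and k :: nat
  assumes d: "\<And>x. x \<in> {-pi..pi} \<Longrightarrow> (f has_real_derivative f' x) (at x)"
    and e1: "f pi = 0" and e2: "f (-pi) = 0"
  shows "fourier_a (deriv f) k = real k * fourier_b f k"
    and "fourier_b (deriv f) k = - real k * fourier_a f k"
proof -
  have dv: "deriv f x = f' x" if "x \<in> {-pi..pi}" for x using d[OF that] by (rule DERIV_imp_deriv)
  have cont: "continuous_on {-pi..pi} f"
    using d by (meson DERIV_continuous continuous_at_imp_continuous_on)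
  have ints: "(\<lambda>x. f x * sin (real k * x)) integrable_on {-pi..pi}"
    by (intro integrable_continuous_interval continuous_intros cont)
  have intc: "(\<lambda>x. f x * cos (real k * x)) integrable_on {-pi..pi}"
    by (intro integrable_continuous_interval continuous_intros cont)
  have ftc1: "((\<lambda>x. f' x * cos (real k * x) - f x * (real k * sin (real k * x))) has_integral
      (f pi * cos (real k * pi) - f (-pi) * cos (real k * (-pi)))) {-pi..pi}"
  proof (rule fundamental_theorem_of_calculus)
    fix x assume x: "x \<in> {-pi..pi}"
    have "((\<lambda>x. f x * cos (real k * x)) has_real_derivative
        f' x * cos (real k * x) - f x * (real k * sin (real k * x))) (at x)"
      using d[OF x] by (auto intro!: derivative_eq_intros)
    thus "((\<lambda>x. f x * cos (real k * x)) has_vector_derivative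
        f' x * cos (real k * x) - f x * (real k * sin (real k * x))) (at x within {-pi..pi})"
      by (simp add: has_real_derivative_iff_has_vector_derivative has_vector_derivative_at_within)
  qed simp
  have ftc2: "((\<lambda>x. f' x * sin (real k * x) + f x * (real k * cos (real k * x))) has_integral
      (f pi * sin (real k * pi) - f (-pi) * sin (real k * (-pi)))) {-pi..pi}"
  proof (rule fundamental_theorem_of_calculus)
    fix x assume x: "x \<in> {-pi..pi}"
    have "((\<lambda>x. f x * sin (real k * x)) has_real_derivative
        f' x * sin (real k * x) + f x * (real k * cos (real k * x))) (at x)"
      using d[OF x] by (auto intro!: derivative_eq_intros)
    thus "((\<lambda>x. f x * sin (real k * x)) has_vector_derivative
        f' x * sin (real k * x) + f x * (real k * cos (real k * x))) (at x within {-pi..pi})"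
      by (simp add: has_real_derivative_iff_has_vector_derivative has_vector_derivative_at_within)
  qed simp
  have i1: "((\<lambda>x. f' x * cos (real k * x)) has_integral real k * integral {-pi..pi} (\<lambda>x. f x * sin (real k * x))) {-pi..pi}"
  proof -
    have "((\<lambda>x. (f' x * cos (real k * x) - f x * (real k * sin (real k * x))) + real k * (f x * sin (real k * x)))
       has_integral (0 + real k * integral {-pi..pi} (\<lambda>x. f x * sin (real k * x)))) {-pi..pi}"
      using ftc1 e1 e2 by (intro has_integral_add has_integral_mult_right integrable_integral ints) simp_all
    thus ?thesis by (simp add: algebra_simps)
  qed
  have i2: "((\<lambda>x. f' x * sin (real k * x)) has_integral - real k * integral {-pi..pi} (\<lambda>x. f x * cos (real k * x))) {-pi..pi}"
  proof -
    have "((\<lambda>x. (f' x * sin (real k * x) + f x * (real k * cos (real k * x))) - real k * (f x * cos (real k * x)))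
       has_integral (0 - real k * integral {-pi..pi} (\<lambda>x. f x * cos (real k * x)))) {-pi..pi}"
      using ftc2 e1 e2 by (intro has_integral_diff has_integral_mult_right integrable_integral intc) simp_all
    thus ?thesis by (simp add: algebra_simps)
  qed
  have "integral {-pi..pi} (\<lambda>t. deriv f t * cos (real k * t)) = integral {-pi..pi} (\<lambda>t. f' t * cos (real k * t))"
    by (intro integral_cong) (simp add: dv)
  thus "fourier_a (deriv f) k = real k * fourier_b f k"
    using integral_unique[OF i1] by (simp add: fourier_a_def fourier_b_def)
  have "integral {-pi..pi} (\<lambda>t. deriv f t * sin (real k * t)) = integral {-pi..pi} (\<lambda>t. f' t * sin (real k * t))"
    by (intro integral_cong) (simp add: dv)
  thus "fourier_b (deriv f) k = - real k * fourier_a f k"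
    using integral_unique[OF i2] by (simp add: fourier_a_def fourier_b_def)
qed

lemma summation_deriv:
  "(summation_mean lam N f has_real_derivative
     (\<Sum>k=1..N. lam N k * (fourier_a f k * (- real k * sin (real k * \<omega>)) + fourier_b f k * (real k * cos (real k * \<omega>))))) (at \<omega>)"
  unfolding summation_mean_def[abs_def]
  by (auto intro!: derivative_eq_intros DERIV_sum simp: algebra_simps)

lemma summation_deriv_eq:
  fixes f f' :: "real \<Rightarrow> real"
  assumes d: "\<And>x. x \<in> {-pi..pi} \<Longrightarrow> (f has_real_derivative f' x) (at x)"
    and e1: "f pi = 0" and e2: "f (-pi) = 0"
  shows "(summation_mean lam N f has_real_derivative summation_mean lam N (deriv f) \<omega>) (at \<omega>)"
proof -
  have "summation_mean lam N (deriv f) \<omega> =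
     (\<Sum>k=1..N. lam N k * (fourier_a f k * (- real k * sin (real k * \<omega>)) + fourier_b f k * (real k * cos (real k * \<omega>))))"
    using fourier_deriv[OF d e1 e2] by (simp add: summation_mean_def algebra_simps)
  thus ?thesis using summation_deriv by simp
qed



lemma abs4: fixes a b c e :: real shows "\<bar>a+b+c+e\<bar> \<le> \<bar>a\<bar>+\<bar>b\<bar>+\<bar>c\<bar>+\<bar>e\<bar>" by linarith

lemma frac_bound: fixes x y c X Y d :: real shows "\<bar>x\<bar> \<le> X \<Longrightarrow> \<bar>y\<bar> \<le> Y \<Longrightarrow> d \<le> \<bar>c\<bar> \<Longrightarrow> 0 < d \<Longrightarrow> \<bar>x*y/c\<bar> \<le> X*Y/d"
  by (simp add: abs_mult frac_le mult_mono)


context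
  fixes \<theta> \<theta>' :: "real \<Rightarrow> real" and \<omega>0 :: real
  assumes odd: "\<And>x. \<theta> (- x) = - \<theta> x"
    and thd: "\<And>x. (\<theta> has_real_derivative \<theta>' x) (at x)"
    and thc: "continuous_on UNIV \<theta>'"
    and flat: "\<And>x. x > pi / 3 \<Longrightarrow> \<theta> x = pi / 4"
    and w0: "pi / 3 \<le> \<omega>0" "\<omega>0 < pi / 2"
begin

lemma th_cont: "continuous_on UNIV \<theta>"
  using thd by (meson DERIV_continuous continuous_at_imp_continuous_on)

lemma th_ge: "x \<ge> pi/3 \<Longrightarrow> \<theta> x = pi/4"
proof -
  assume x: "x \<ge> pi/3"
  have cl: "closed {x. \<theta> x = pi/4}"
    using th_cont by (intro closed_Collect_eq) (auto intro: continuous_on_const)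
  have "{pi/3<..} \<subseteq> {x. \<theta> x = pi/4}" using flat by auto
  hence "closure {pi/3<..} \<subseteq> {x. \<theta> x = pi/4}" using cl closure_minimal by blast
  thus ?thesis using x by auto
qed

lemma th_le: "x \<le> -pi/3 \<Longrightarrow> \<theta> x = -pi/4"
  using th_ge[of "-x"] odd[of x] by auto

lemma thd_zero: "\<bar>y\<bar> > pi/3 \<Longrightarrow> \<theta>' y = 0"
proof -
  assume y: "\<bar>y\<bar> > pi/3"
  show ?thesis
  proof (cases "y > 0")
    case True
    have "((\<lambda>x. pi/4) has_real_derivative \<theta>' y) (at y)"
      apply (rule has_field_derivative_transform_within_open[OF thd[of y], of "{pi/3<..}"])
      using y True flat by auto
    thus ?thesis using DERIV_const DERIV_unique by blast
  next
    case False
    have "((\<lambda>x. -pi/4) has_real_derivative \<theta>' y) (at y)"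
      apply (rule has_field_derivative_transform_within_open[OF thd[of y], of "{..< -pi/3}"])
      using y False th_le by (auto simp: less_eq_real_def)
    thus ?thesis using DERIV_const DERIV_unique by blast
  qed
qed

lemma thd_bound: "\<exists>B. \<forall>y. \<bar>\<theta>' y\<bar> \<le> B"
proof -
  have "compact (\<theta>' ` {-2..2})"
    by (rule compact_continuous_image) (auto intro: continuous_on_subset[OF thc])
  then obtain B where B: "\<And>z. z \<in> \<theta>' ` {-2..2} \<Longrightarrow> norm z \<le> B"
    using compact_imp_bounded bounded_iff by metis
  have "\<bar>\<theta>' y\<bar> \<le> max B 0" for y
  proof (cases "\<bar>y\<bar> \<le> 2")
    case True thus ?thesis using B[of "\<theta>' y"] by force
  next
    case False
    hence "\<bar>y\<bar> > pi/3" using pi_less_4 by linarith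
    thus ?thesis using thd_zero by auto
  qed
  thus ?thesis by blast
qed


definition "cc = pi / (3 * (pi - 2 * \<omega>0))"
definition "Dphi x = - sgn x * cc * sin (pi/4 + \<theta> (cc * (\<bar>x\<bar> - pi))) * \<theta>' (cc * (\<bar>x\<bar> - pi))"

lemma cc_pos: "cc > 0" using w0 by (simp add: cc_def)
lemma cc1: "cc * (2*\<omega>0 - pi) = - (pi/3)" using w0 by (simp add: cc_def field_simps)
lemma cc2: "cc * (pi - 2*\<omega>0) = pi/3" using w0 by (simp add: cc_def field_simps)

lemma phi_eq: "meyer_phi \<theta> \<omega>0 x = cos (pi/4 + \<theta> (cc * (\<bar>x\<bar> - pi)))"
proof -
  consider "\<bar>x\<bar> \<le> 2*\<omega>0" | "2*\<omega>0 < \<bar>x\<bar>" "\<bar>x\<bar> \<le> 2*pi - 2*\<omega>0" | "\<bar>x\<bar> > 2*pi - 2*\<omega>0"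
    by linarith
  thus ?thesis
  proof cases
    case 1
    have "cc * (\<bar>x\<bar> - pi) \<le> cc * (2*\<omega>0 - pi)" using 1 cc_pos by (intro mult_left_mono) auto
    hence "\<theta> (cc * (\<bar>x\<bar> - pi)) = -pi/4" using cc1 by (intro th_le) auto
    thus ?thesis using 1 by (simp add: meyer_phi_def)
  next
    case 2 thus ?thesis by (simp add: meyer_phi_def cc_def)
  next
    case 3
    have "cc * (\<bar>x\<bar> - pi) > cc * (pi - 2*\<omega>0)" using 3 cc_pos by (intro mult_strict_left_mono) auto
    hence "\<theta> (cc * (\<bar>x\<bar> - pi)) = pi/4" using cc2 by (intro flat) auto
    moreover have "cos (pi/4 + pi/4) = 0" proof -
      have "pi/4 + pi/4 = pi/2" by simp
      thus ?thesis by simp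
    qed
    ultimately show ?thesis using 3 w0 by (simp only: meyer_phi_def) auto
  qed
qed

lemma Psi_deriv: "((\<lambda>y. cos (pi/4 + \<theta> (cc * (y - pi)))) has_real_derivative
   - sin (pi/4 + \<theta> (cc * (x - pi))) * (\<theta>' (cc * (x - pi)) * cc)) (at x)"
proof -
  have "((\<lambda>y. \<theta> (cc * (y - pi))) has_real_derivative \<theta>' (cc * (x - pi)) * cc) (at x)"
    by (rule DERIV_chain2[OF thd]) (auto intro!: derivative_eq_intros)
  thus ?thesis by (auto intro!: derivative_eq_intros)
qed

lemma phi_deriv: "(meyer_phi \<theta> \<omega>0 has_real_derivative Dphi x) (at x)"
proof -
  consider "x > 0" | "x < 0" | "x = 0" by linarith
  thus ?thesis
  proof cases
    case 1
    have e: "- sin (pi/4 + \<theta> (cc * (x - pi))) * (\<theta>' (cc * (x - pi)) * cc) = Dphi x"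
      using 1 by (simp add: Dphi_def)
    show ?thesis
      apply (rule has_field_derivative_transform_within_open[OF Psi_deriv[of x, unfolded e], of "{0<..}"])
      using 1 by (auto simp: phi_eq)
  next
    case 2
    have "((\<lambda>y. cos (pi/4 + \<theta> (cc * ((-y) - pi)))) has_real_derivative
      - sin (pi/4 + \<theta> (cc * ((-x) - pi))) * (\<theta>' (cc * ((-x) - pi)) * cc) * (-1)) (at x)"
      using DERIV_chain2[where g="\<lambda>y. -y" and x=x, OF Psi_deriv[of "-x"] DERIV_minus[OF DERIV_ident]]
      by simp
    moreover have "- sin (pi/4 + \<theta> (cc * ((-x) - pi))) * (\<theta>' (cc * ((-x) - pi)) * cc) * (-1) = Dphi x"
      using 2 by (simp add: Dphi_def)
    ultimately have d: "((\<lambda>y. cos (pi/4 + \<theta> (cc * ((-y) - pi)))) has_real_derivative Dphi x) (at x)" by simp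
    show ?thesis
      apply (rule has_field_derivative_transform_within_open[OF d, of "{..<0}"])
      using 2 by (auto simp: phi_eq)
  next
    case 3
    have "((\<lambda>y. 1) has_real_derivative Dphi x) (at x)" using 3 by (simp add: Dphi_def)
    thus ?thesis
      apply (rule has_field_derivative_transform_within_open[of _ _ _ "{-2*\<omega>0<..<2*\<omega>0}"])
      using 3 w0 pi_gt_zero by (auto simp: meyer_phi_def)
  qed
qed

lemma phi_bound: "\<bar>meyer_phi \<theta> \<omega>0 x\<bar> \<le> 1" by (simp add: phi_eq)

lemma Dphi_bound: "\<exists>K\<ge>0. \<forall>x. \<bar>Dphi x\<bar> \<le> K"
proof -
  obtain B where B: "\<And>y. \<bar>\<theta>' y\<bar> \<le> B" using thd_bound by blast
  have "\<bar>Dphi x\<bar> \<le> cc * B" for x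
  proof -
    have "\<bar>Dphi x\<bar> = \<bar>sgn x\<bar> * cc * \<bar>sin (pi/4 + \<theta> (cc * (\<bar>x\<bar> - pi)))\<bar> * \<bar>\<theta>' (cc * (\<bar>x\<bar> - pi))\<bar>"
      using cc_pos by (simp add: Dphi_def abs_mult)
    also have "\<dots> \<le> 1 * cc * 1 * B"
      apply (intro mult_mono) using B cc_pos by (auto simp: abs_sgn_eq)
    finally show ?thesis by simp
  qed
  moreover have "cc * B \<ge> 0" using B[of 0] cc_pos by simp
  ultimately show ?thesis by blast
qed


definition "Dm \<omega> = (if \<bar>\<omega>\<bar> < pi then 2 * Dphi (2*\<omega>) else 0)"

lemma mask_inner: "-pi \<le> y \<Longrightarrow> y < pi \<Longrightarrow> meyer_mask \<theta> \<omega>0 y = meyer_phi \<theta> \<omega>0 (2*y)"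
proof -
  assume a: "-pi \<le> y" "y < pi"
  have "\<lfloor>(y + pi) / (2*pi)\<rfloor> = 0" using a by (simp add: floor_eq_iff field_simps)
  thus ?thesis by (simp add: meyer_mask_def)
qed

lemma phi_far: "\<bar>x\<bar> > 2*pi - 2*\<omega>0 \<Longrightarrow> meyer_phi \<theta> \<omega>0 x = 0"
  using w0 by (simp add: meyer_phi_def)

lemma mask_zero: "pi - \<omega>0 < \<bar>y\<bar> \<Longrightarrow> \<bar>y\<bar> < pi + \<omega>0 \<Longrightarrow> meyer_mask \<theta> \<omega>0 y = 0"
proof -
  assume a: "pi - \<omega>0 < \<bar>y\<bar>" "\<bar>y\<bar> < pi + \<omega>0"
  have w: "\<omega>0 < pi" using w0 by linarith
  consider "-pi \<le> y" "y < pi" | "y \<ge> pi" | "y < -pi" by linarith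
  thus ?thesis
  proof cases
    case 1 thus ?thesis using a by (simp add: mask_inner phi_far)
  next
    case 2
    have "\<lfloor>(y + pi) / (2*pi)\<rfloor> = 1" using a 2 w by (simp add: floor_eq_iff field_simps)
    moreover have "\<bar>2 * (y - 2*pi)\<bar> > 2*pi - 2*\<omega>0" using a 2 w by auto
    ultimately show ?thesis by (simp add: meyer_mask_def phi_far)
  next
    case 3
    have "\<lfloor>(y + pi) / (2*pi)\<rfloor> = -1" using a 3 w by (simp add: floor_eq_iff field_simps)
    moreover have "\<bar>2 * (y + 2*pi)\<bar> > 2*pi - 2*\<omega>0" using a 3 w by auto
    ultimately show ?thesis by (simp add: meyer_mask_def phi_far)
  qed
qed

lemma mask_deriv: "\<bar>\<omega>\<bar> \<le> pi \<Longrightarrow> (meyer_mask \<theta> \<omega>0 has_real_derivative Dm \<omega>) (at \<omega>)"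
proof -
  assume a: "\<bar>\<omega>\<bar> \<le> pi"
  have w: "\<omega>0 < pi" "\<omega>0 > 0" using w0 pi_gt_zero by linarith+
  consider "\<bar>\<omega>\<bar> < pi" | "\<omega> = pi" | "\<omega> = -pi" using a by linarith
  thus ?thesis
  proof cases
    case 1
    have "((\<lambda>y. meyer_phi \<theta> \<omega>0 (2*y)) has_real_derivative Dphi (2*\<omega>) * 2) (at \<omega>)"
      using DERIV_chain2[where g="\<lambda>y. 2*y" and x=\<omega>, OF phi_deriv[of "2*\<omega>"] DERIV_cmult[OF DERIV_ident, of 2]]
      by simp
    hence d: "((\<lambda>y. meyer_phi \<theta> \<omega>0 (2*y)) has_real_derivative Dm \<omega>) (at \<omega>)"
      using 1 by (simp add: Dm_def mult.commute)
    show ?thesis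
      apply (rule has_field_derivative_transform_within_open[OF d, of "{-pi<..<pi}"])
      using 1 by (auto simp: mask_inner)
  next
    case 2
    have d: "((\<lambda>y. 0) has_real_derivative Dm \<omega>) (at \<omega>)" using 2 by (simp add: Dm_def)
    show ?thesis
      apply (rule has_field_derivative_transform_within_open[OF d, of "{pi-\<omega>0<..<pi+\<omega>0}"])
        apply simp
       apply (use 2 w in simp)
      subgoal for x using w by (intro mask_zero[symmetric]) auto
      done
  next
    case 3
    have d: "((\<lambda>y. 0) has_real_derivative Dm \<omega>) (at \<omega>)" using 3 by (simp add: Dm_def)
    show ?thesis
      apply (rule has_field_derivative_transform_within_open[OF d, of "{-pi-\<omega>0<..< -pi+\<omega>0}"])
        apply simp
       apply (use 3 w in simp)
      subgoal for x using w by (intro mask_zero[symmetric]) auto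
      done
  qed
qed

lemma mask_small: "\<bar>\<omega>\<bar> \<le> pi \<Longrightarrow> \<bar>\<omega>\<bar> > pi - \<omega>0 \<Longrightarrow> meyer_mask \<theta> \<omega>0 \<omega> = 0 \<and> Dm \<omega> = 0"
proof -
  assume a: "\<bar>\<omega>\<bar> \<le> pi" "\<bar>\<omega>\<bar> > pi - \<omega>0"
  have w: "\<omega>0 > 0" using w0 pi_gt_zero by linarith
  have m: "meyer_mask \<theta> \<omega>0 \<omega> = 0" using a w by (intro mask_zero) auto
  have "Dm \<omega> = 0"
  proof (cases "\<bar>\<omega>\<bar> < pi")
    case True
    have "cc * (\<bar>2*\<omega>\<bar> - pi) > cc * (pi - 2*\<omega>0)" using a cc_pos by (intro mult_strict_left_mono) auto
    hence "\<bar>cc * (\<bar>2*\<omega>\<bar> - pi)\<bar> > pi/3" using cc2 by auto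
    hence "\<theta>' (cc * (\<bar>2*\<omega>\<bar> - pi)) = 0" by (rule thd_zero)
    thus ?thesis using True by (simp add: Dm_def Dphi_def)
  qed (simp add: Dm_def)
  with m show ?thesis by simp
qed

lemma mask_bound: "\<bar>meyer_mask \<theta> \<omega>0 y\<bar> \<le> 1"
  by (simp add: meyer_mask_def phi_bound)

lemma mask0: "meyer_mask \<theta> \<omega>0 0 = 1"
  using w0 pi_gt_zero by (simp add: mask_inner meyer_phi_def)

lemma Dm_bound: "\<exists>M\<ge>0. \<forall>x. \<bar>Dm x\<bar> \<le> M"
proof -
  obtain K where K: "K \<ge> 0" "\<And>x. \<bar>Dphi x\<bar> \<le> K" using Dphi_bound by blast
  have "\<bar>Dm x\<bar> \<le> 2*K" for x using K(1) K(2)[of "2*x"] by (auto simp: Dm_def abs_mult)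
  thus ?thesis using K by (intro exI[of _ "2*K"]) auto
qed


definition "P (l::nat) (\<omega>::real) = cos (\<omega>/2) ^ (2*l)"
definition "Pd (l::nat) (\<omega>::real) = - real l * cos (\<omega>/2) ^ (2*l-1) * sin (\<omega>/2)"
definition "G l \<omega> = (if \<bar>\<omega>\<bar> < pi then (Dm \<omega> * P l \<omega> - meyer_mask \<theta> \<omega>0 \<omega> * Pd l \<omega>) / (P l \<omega> * P l \<omega>) else 0)"

lemma P_deriv: "(P l has_real_derivative Pd l \<omega>) (at \<omega>)"
proof -
  have "((\<lambda>x. cos (x/2) ^ (2*l)) has_real_derivative
     real (2*l) * cos (\<omega>/2) ^ (2*l - 1) * (- sin (\<omega>/2) * (1/2))) (at \<omega>)"
    by (auto intro!: derivative_eq_intros)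
  thus ?thesis unfolding P_def Pd_def by (simp add: fun_eq_iff mult.assoc)
qed

lemma cos_half_pos: "\<bar>\<omega>\<bar> < pi \<Longrightarrow> cos (\<omega>/2) > 0"
  by (intro cos_gt_zero_pi) auto

lemma cos_half_big: "\<bar>\<omega>\<bar> \<le> pi - \<omega>0 \<Longrightarrow> cos (\<omega>/2) \<ge> 1/2"
proof -
  assume a: "\<bar>\<omega>\<bar> \<le> pi - \<omega>0"
  have "cos (\<bar>\<omega>\<bar>/2) \<ge> cos (pi/3)"
    using a w0 by (intro cos_monotone_0_pi_le) auto
  moreover have "cos (\<omega>/2) = cos (\<bar>\<omega>\<bar>/2)" by (cases "\<omega> \<ge> 0") auto
  ultimately show ?thesis by (simp add: cos_60)
qed

lemma Pd_pi: "\<bar>\<omega>\<bar> = pi \<Longrightarrow> Pd l \<omega> = 0"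
proof -
  assume a: "\<bar>\<omega>\<bar> = pi"
  have "\<omega> = pi \<or> \<omega> = -pi" using a by auto
  hence "cos (\<omega>/2) = 0" by auto
  thus ?thesis by (cases l) (auto simp: Pd_def)
qed

lemma maskl_eq: "meyer_mask_l \<theta> \<omega>0 l = (\<lambda>x. meyer_mask \<theta> \<omega>0 x / P l x)"
  by (auto simp: fun_eq_iff meyer_mask_l_def P_def)

lemma maskl_pi: "\<bar>\<omega>\<bar> = pi \<Longrightarrow> meyer_mask_l \<theta> \<omega>0 l \<omega> = 0"
  using mask_small[of \<omega>] w0 pi_gt_zero by (simp add: meyer_mask_l_def)

lemma maskl_deriv: "\<bar>\<omega>\<bar> \<le> pi \<Longrightarrow> (meyer_mask_l \<theta> \<omega>0 l has_real_derivative G l \<omega>) (at \<omega>)"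
proof -
  assume a: "\<bar>\<omega>\<bar> \<le> pi"
  have w: "\<omega>0 < pi" "\<omega>0 > 0" using w0 pi_gt_zero by linarith+
  consider "\<bar>\<omega>\<bar> < pi" | "\<omega> = pi" | "\<omega> = -pi" using a by linarith
  thus ?thesis
  proof cases
    case 1
    have "P l \<omega> \<noteq> 0" using cos_half_pos[OF 1] by (simp add: P_def)
    from DERIV_divide[OF mask_deriv[OF a] P_deriv this]
    show ?thesis using 1 by (simp add: maskl_eq G_def)
  next
    case 2
    have d: "((\<lambda>y. 0) has_real_derivative G l \<omega>) (at \<omega>)" using 2 by (simp add: G_def)
    show ?thesis
      apply (rule has_field_derivative_transform_within_open[OF d, of "{pi-\<omega>0<..<pi+\<omega>0}"])
        apply simp
       apply (use 2 w in simp)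
      subgoal for x using w mask_zero[of x] by (auto simp: meyer_mask_l_def)
      done
  next
    case 3
    have d: "((\<lambda>y. 0) has_real_derivative G l \<omega>) (at \<omega>)" using 3 by (simp add: G_def)
    show ?thesis
      apply (rule has_field_derivative_transform_within_open[OF d, of "{-pi-\<omega>0<..< -pi+\<omega>0}"])
        apply simp
       apply (use 3 w in simp)
      subgoal for x using w mask_zero[of x] by (auto simp: meyer_mask_l_def)
      done
  qed
qed

lemma ident: "\<bar>\<omega>\<bar> \<le> pi \<Longrightarrow> Dm \<omega> = Pd l \<omega> * meyer_mask_l \<theta> \<omega>0 l \<omega> + P l \<omega> * G l \<omega>"
proof (cases "\<bar>\<omega>\<bar> < pi")
  case True
  have "P l \<omega> \<noteq> 0" using cos_half_pos[OF True] by (simp add: P_def)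
  thus ?thesis using True by (simp add: G_def maskl_eq field_simps)
next
  case False
  assume "\<bar>\<omega>\<bar> \<le> pi"
  hence e: "\<bar>\<omega>\<bar> = pi" using False by simp
  thus ?thesis using Pd_pi[OF e] by (simp add: G_def Dm_def)
qed

lemma Pd_bound: "\<bar>Pd l \<omega>\<bar> \<le> real l"
proof -
  have "\<bar>Pd l \<omega>\<bar> = real l * \<bar>cos (\<omega>/2)\<bar> ^ (2*l-1) * \<bar>sin (\<omega>/2)\<bar>"
    by (simp add: Pd_def abs_mult power_abs)
  also have "\<dots> \<le> real l * 1 * 1"
    by (intro mult_mono power_le_one) auto
  finally show ?thesis by simp
qed

lemma P_bound: "\<bar>P l \<omega>\<bar> \<le> 1"
  by (simp add: P_def power_abs power_le_one)

lemma Pdf_bound: "\<bar>\<omega>\<bar> \<le> pi \<Longrightarrow> \<bar>Pd l \<omega> * meyer_mask_l \<theta> \<omega>0 l \<omega>\<bar> \<le> 2 * real l"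
proof (cases "meyer_mask \<theta> \<omega>0 \<omega> = 0")
  case True thus ?thesis by (simp add: meyer_mask_l_def)
next
  case False
  assume a: "\<bar>\<omega>\<bar> \<le> pi"
  have s: "\<bar>\<omega>\<bar> \<le> pi - \<omega>0" using mask_small[OF a] False by force
  define c where "c = cos (\<omega>/2)"
  have c: "c \<ge> 1/2" using cos_half_big[OF s] by (simp add: c_def)
  show ?thesis
  proof (cases l)
    case 0 thus ?thesis by (simp add: Pd_def)
  next
    case (Suc k)
    have "Pd l \<omega> * meyer_mask_l \<theta> \<omega>0 l \<omega> = - real l * sin (\<omega>/2) * meyer_mask \<theta> \<omega>0 \<omega> / c"
      using c Suc by (simp add: Pd_def meyer_mask_l_def c_def[symmetric] field_simps)
    also have "\<bar>\<dots>\<bar> = real l * (\<bar>sin (\<omega>/2)\<bar> * \<bar>meyer_mask \<theta> \<omega>0 \<omega>\<bar>) / c"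
      using c by (simp add: abs_mult)
    also have "\<dots> \<le> real l * 1 / c"
      using c mask_bound[of \<omega>] by (intro divide_right_mono mult_left_mono) (auto intro: mult_le_one)
    also have "\<dots> \<le> real l * 1 / (1/2)"
      using c by (intro divide_left_mono) auto
    finally show ?thesis by simp
  qed
qed

lemma G_bound: "\<exists>C. \<forall>\<omega>. \<bar>\<omega>\<bar> \<le> pi \<longrightarrow> \<bar>G l \<omega>\<bar> \<le> C"
proof -
  obtain M where M: "M \<ge> 0" "\<And>x. \<bar>Dm x\<bar> \<le> M" using Dm_bound by blast
  define b where "b = ((1/2::real) ^ (2*l)) * ((1/2) ^ (2*l))"
  have b: "b > 0" by (simp add: b_def)
  have "\<bar>G l \<omega>\<bar> \<le> (M + real l) / b" if a: "\<bar>\<omega>\<bar> \<le> pi" for \<omega>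
  proof (cases "meyer_mask \<theta> \<omega>0 \<omega> = 0 \<and> Dm \<omega> = 0")
    case True thus ?thesis using M b by (simp add: G_def)
  next
    case False
    have s: "\<bar>\<omega>\<bar> \<le> pi - \<omega>0" using mask_small[OF a] False by force
    have lt: "\<bar>\<omega>\<bar> < pi" using s w0 by linarith
    have c: "cos (\<omega>/2) \<ge> 1/2" using cos_half_big[OF s] .
    have Pb: "P l \<omega> \<ge> (1/2) ^ (2*l)" unfolding P_def by (rule power_mono) (use c in auto)
    have "0 \<le> (1/2::real)^(2*l)" by simp
    hence "0 \<le> P l \<omega>" using Pb by linarith
    hence PP: "P l \<omega> * P l \<omega> \<ge> b" unfolding b_def using Pb by (intro mult_mono) auto
    have num: "\<bar>Dm \<omega> * P l \<omega> - meyer_mask \<theta> \<omega>0 \<omega> * Pd l \<omega>\<bar> \<le> M * 1 + 1 * real l"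
    proof -
      have "\<bar>Dm \<omega> * P l \<omega> - meyer_mask \<theta> \<omega>0 \<omega> * Pd l \<omega>\<bar> \<le> \<bar>Dm \<omega>\<bar> * \<bar>P l \<omega>\<bar> + \<bar>meyer_mask \<theta> \<omega>0 \<omega>\<bar> * \<bar>Pd l \<omega>\<bar>"
        by (simp add: abs_mult[symmetric] abs_triangle_ineq4)
      also have "\<dots> \<le> M * 1 + 1 * real l"
        using M P_bound[of l \<omega>] mask_bound[of \<omega>] Pd_bound[of l \<omega>]
        by (intro add_mono mult_mono) auto
      finally show ?thesis .
    qed
    have "\<bar>G l \<omega>\<bar> = \<bar>Dm \<omega> * P l \<omega> - meyer_mask \<theta> \<omega>0 \<omega> * Pd l \<omega>\<bar> / (P l \<omega> * P l \<omega>)"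
      using lt by (simp add: G_def)
    also have "\<dots> \<le> (M + real l) / b"
      using num PP b M by (intro frac_le) auto
    finally show ?thesis .
  qed
  thus ?thesis by blast
qed


lemma main_bound:
  fixes lam :: "nat \<Rightarrow> nat \<Rightarrow> real" and n :: "nat \<Rightarrow> nat" and l :: nat and d M :: real
  assumes l1: "l \<ge> 1" and dpos: "d > 0" and du: "d \<le> \<bar>u_l \<theta> \<omega>0 lam n l 0\<bar>"
    and M: "M \<ge> 0" "\<And>x. \<bar>Dm x\<bar> \<le> M"
  shows "supC (\<lambda>\<omega>. deriv (m_l \<theta> \<omega>0 lam n l) \<omega> - deriv (meyer_mask \<theta> \<omega>0) \<omega>)
          \<le> (5 + M) / d * mu_l \<theta> \<omega>0 lam n l"
    and "0 \<le> supC (\<lambda>\<omega>. deriv (m_l \<theta> \<omega>0 lam n l) \<omega> - deriv (meyer_mask \<theta> \<omega>0) \<omega>)"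
    and "0 \<le> mu_l \<theta> \<omega>0 lam n l"
proof -
  define f where "f = meyer_mask_l \<theta> \<omega>0 l"
  define u where "u = u_l \<theta> \<omega>0 lam n l"
  define e where "e = u1_l \<theta> \<omega>0 lam n l"
  define c where "c = u 0"
  define \<alpha> where "\<alpha> = alpha_l \<theta> \<omega>0 lam n l"
  define \<gamma> where "\<gamma> = gamma_l \<theta> \<omega>0 lam n l"
  have cd: "d \<le> \<bar>c\<bar>" using du by (simp add: c_def u_def)
  hence c0: "c \<noteq> 0" using dpos by auto
  have fd: "\<And>x. x \<in> {-pi..pi} \<Longrightarrow> (f has_real_derivative G l x) (at x)"
    unfolding f_def by (intro maskl_deriv) auto
  have fpi: "f pi = 0" "f (-pi) = 0" unfolding f_def by (auto intro: maskl_pi)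
  have ud: "(u has_real_derivative e \<omega>) (at \<omega>)" for \<omega>
    unfolding u_def e_def u_l_def u1_l_def f_def[symmetric]
    by (rule summation_deriv_eq[OF fd fpi])
  have dfG: "deriv f x = G l x" if "x \<in> {-pi..pi}" for x using fd[OF that] by (rule DERIV_imp_deriv)
  have fcont: "continuous_on {-pi..pi} f"
    using fd by (meson DERIV_continuous continuous_at_imp_continuous_on)
  have ucont: "continuous_on {-pi..pi} u"
    using ud by (meson DERIV_continuous continuous_at_imp_continuous_on)
  have econt: "continuous_on {-pi..pi} e"
    unfolding e_def u1_l_def summation_mean_def by (intro continuous_intros)
  have bA: "bdd_above ((\<lambda>\<omega>. \<bar>u \<omega> - f \<omega>\<bar>) ` {-pi..pi})"
    by (intro bounded_imp_bdd_above compact_imp_bounded compact_continuous_image continuous_intros ucont fcont) auto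
  have ua: "\<bar>u \<omega> - f \<omega>\<bar> \<le> \<alpha>" if "\<omega> \<in> {-pi..pi}" for \<omega>
    unfolding \<alpha>_def alpha_l_def supC_def u_def[symmetric] f_def[symmetric]
    by (rule cSUP_upper[OF that bA])
  have a0: "\<alpha> \<ge> 0" using ua[of 0] by auto
  obtain Cg where Cg: "\<And>\<omega>. \<bar>\<omega>\<bar> \<le> pi \<Longrightarrow> \<bar>G l \<omega>\<bar> \<le> Cg" using G_bound[of l] by blast
  have "bounded (e ` {-pi..pi})"
    by (rule compact_imp_bounded[OF compact_continuous_image[OF econt compact_Icc]])
  then obtain Ce where Ce0: "\<forall>y\<in>e ` {-pi..pi}. norm y \<le> Ce" unfolding bounded_iff by blast
  have Ce: "\<And>\<omega>. \<omega> \<in> {-pi..pi} \<Longrightarrow> norm (e \<omega>) \<le> Ce" using Ce0 by blast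
  have bG: "bdd_above ((\<lambda>\<omega>. \<bar>e \<omega> - deriv f \<omega>\<bar>) ` {-pi..pi})"
  proof (rule bdd_aboveI2)
    fix \<omega> :: real assume w: "\<omega> \<in> {-pi..pi}"
    have "\<bar>e \<omega> - deriv f \<omega>\<bar> \<le> \<bar>e \<omega>\<bar> + \<bar>G l \<omega>\<bar>" using dfG[OF w] by simp
    also have "\<dots> \<le> Ce + Cg" using Ce[OF w] Cg[of \<omega>] w by (intro add_mono) auto
    finally show "\<bar>e \<omega> - deriv f \<omega>\<bar> \<le> Ce + Cg" .
  qed
  have eg: "\<bar>e \<omega> - G l \<omega>\<bar> \<le> \<gamma>" if w: "\<omega> \<in> {-pi..pi}" for \<omega>
  proof -
    have "\<bar>e \<omega> - deriv f \<omega>\<bar> \<le> \<gamma>"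
      unfolding \<gamma>_def gamma_l_def supC_def e_def[symmetric] f_def[symmetric]
      by (rule cSUP_upper[OF w bG])
    thus ?thesis using dfG[OF w] by simp
  qed
  have g0: "\<gamma> \<ge> 0" using eg[of 0] by auto
  have c1: "\<bar>1 - c\<bar> \<le> \<alpha>"
  proof -
    have "f 0 = 1" by (simp add: f_def meyer_mask_l_def mask0)
    thus ?thesis using ua[of 0] by (simp add: c_def abs_minus_commute)
  qed
  have meq: "m_l \<theta> \<omega>0 lam n l = (\<lambda>x. P l x * u x / c)"
    by (auto simp: fun_eq_iff m_l_def P_def u_def c_def)
  have md: "deriv (m_l \<theta> \<omega>0 lam n l) \<omega> = (Pd l \<omega> * u \<omega> + P l \<omega> * e \<omega>) / c" for \<omega>
  proof -
    have "((\<lambda>x. P l x * u x / c) has_real_derivative (Pd l \<omega> * u \<omega> + P l \<omega> * e \<omega>) / c) (at \<omega>)"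
      using DERIV_cdivide[OF DERIV_mult[OF P_deriv ud], where c=c] by (simp add: algebra_simps)
    thus ?thesis unfolding meq by (rule DERIV_imp_deriv)
  qed
  define K where "K = (5 + M) / d * (real l * \<alpha> + \<gamma>)"
  have pw: "\<bar>deriv (m_l \<theta> \<omega>0 lam n l) \<omega> - deriv (meyer_mask \<theta> \<omega>0) \<omega>\<bar> \<le> K"
    if w: "\<omega> \<in> {-pi..pi}" for \<omega>
  proof -
    have w': "\<bar>\<omega>\<bar> \<le> pi" using w by auto
    have dm: "deriv (meyer_mask \<theta> \<omega>0) \<omega> = Dm \<omega>" using mask_deriv[OF w'] by (rule DERIV_imp_deriv)
    have id: "Dm \<omega> = Pd l \<omega> * f \<omega> + P l \<omega> * G l \<omega>" unfolding f_def by (rule ident[OF w'])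
    have split: "deriv (m_l \<theta> \<omega>0 lam n l) \<omega> - deriv (meyer_mask \<theta> \<omega>0) \<omega> =
        Pd l \<omega> * (u \<omega> - f \<omega>) / c + (Pd l \<omega> * f \<omega>) * (1 - c) / c
        + P l \<omega> * (e \<omega> - G l \<omega>) / c + (P l \<omega> * G l \<omega>) * (1 - c) / c"
      unfolding md dm id using c0 by (simp add: field_simps)
    have pf: "\<bar>Pd l \<omega> * f \<omega>\<bar> \<le> 2 * real l" unfolding f_def by (rule Pdf_bound[OF w'])
    have pg: "\<bar>P l \<omega> * G l \<omega>\<bar> \<le> M + 2 * real l"
    proof -
      have "P l \<omega> * G l \<omega> = Dm \<omega> - Pd l \<omega> * f \<omega>" using id by simp
      also have "\<bar>\<dots>\<bar> \<le> \<bar>Dm \<omega>\<bar> + \<bar>Pd l \<omega> * f \<omega>\<bar>" by (rule abs_triangle_ineq4)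
      also have "\<dots> \<le> M + 2 * real l" using M(2)[of \<omega>] pf by simp
      finally show ?thesis .
    qed
    have t1: "\<bar>Pd l \<omega> * (u \<omega> - f \<omega>) / c\<bar> \<le> real l * \<alpha> / d"
      by (rule frac_bound[OF Pd_bound ua[OF w] cd dpos])
    have t2: "\<bar>(Pd l \<omega> * f \<omega>) * (1 - c) / c\<bar> \<le> (2 * real l) * \<alpha> / d"
      by (rule frac_bound[OF pf c1 cd dpos])
    have t3: "\<bar>P l \<omega> * (e \<omega> - G l \<omega>) / c\<bar> \<le> 1 * \<gamma> / d"
      by (rule frac_bound[OF P_bound eg[OF w] cd dpos])
    have t4: "\<bar>(P l \<omega> * G l \<omega>) * (1 - c) / c\<bar> \<le> (M + 2 * real l) * \<alpha> / d"
      by (rule frac_bound[OF pg c1 cd dpos])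
    have "\<bar>deriv (m_l \<theta> \<omega>0 lam n l) \<omega> - deriv (meyer_mask \<theta> \<omega>0) \<omega>\<bar>
        \<le> real l * \<alpha> / d + (2 * real l) * \<alpha> / d + 1 * \<gamma> / d + (M + 2 * real l) * \<alpha> / d"
      unfolding split using t1 t2 t3 t4 abs4[of "Pd l \<omega> * (u \<omega> - f \<omega>) / c" "(Pd l \<omega> * f \<omega>) * (1 - c) / c"
        "P l \<omega> * (e \<omega> - G l \<omega>) / c" "(P l \<omega> * G l \<omega>) * (1 - c) / c"] by linarith
    also have "\<dots> = (5 * real l * \<alpha> + M * \<alpha> + \<gamma>) / d" using dpos by (simp add: field_simps)
    also have "\<dots> \<le> ((5 + M) * (real l * \<alpha> + \<gamma>)) / d"
    proof (rule divide_right_mono)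
      have "M * \<alpha> \<le> M * (real l * \<alpha>)" using M(1) a0 l1 by (intro mult_left_mono) (auto intro: mult_le_cancel_right1[THEN iffD2])
      moreover have "\<gamma> \<le> (5 + M) * \<gamma>" using M(1) g0 by (simp add: algebra_simps)
      moreover have "0 \<le> M * (real l * \<alpha>)" using M(1) a0 by simp
      ultimately show "5 * real l * \<alpha> + M * \<alpha> + \<gamma> \<le> (5 + M) * (real l * \<alpha> + \<gamma>)"
        by (simp add: algebra_simps)
    qed (use dpos in simp)
    finally show ?thesis by (simp add: K_def)
  qed
  show "supC (\<lambda>\<omega>. deriv (m_l \<theta> \<omega>0 lam n l) \<omega> - deriv (meyer_mask \<theta> \<omega>0) \<omega>) \<le> (5 + M) / d * mu_l \<theta> \<omega>0 lam n l"
    unfolding supC_def using pw by (intro cSUP_least) (auto simp: K_def mu_l_def \<alpha>_def \<gamma>_def)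
  have "bdd_above ((\<lambda>\<omega>. \<bar>deriv (m_l \<theta> \<omega>0 lam n l) \<omega> - deriv (meyer_mask \<theta> \<omega>0) \<omega>\<bar>) ` {-pi..pi})"
    using pw by (intro bdd_aboveI2) auto
  from cSUP_upper[OF _ this, of 0]
  show "0 \<le> supC (\<lambda>\<omega>. deriv (m_l \<theta> \<omega>0 lam n l) \<omega> - deriv (meyer_mask \<theta> \<omega>0) \<omega>)"
    unfolding supC_def by force
  show "0 \<le> mu_l \<theta> \<omega>0 lam n l" using a0 g0 by (simp add: mu_l_def \<alpha>_def \<gamma>_def)
qed

end

theorem lemma2:
  fixes \<theta> :: "real \<Rightarrow> real" and \<omega>0 :: real
    and lam :: "nat \<Rightarrow> nat \<Rightarrow> real" and n :: "nat \<Rightarrow> nat" and l0 :: nat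
  assumes odd: "\<And>x. \<theta> (- x) = - \<theta> x"
    and mono: "mono \<theta>"
    and C2: "\<exists>\<theta>' \<theta>''. (\<forall>x. (\<theta> has_real_derivative \<theta>' x) (at x))
               \<and> (\<forall>x. (\<theta>' has_real_derivative \<theta>'' x) (at x)) \<and> continuous_on UNIV \<theta>''"
    and flat: "\<And>x. x > pi / 3 \<Longrightarrow> \<theta> x = pi / 4"
    and w0: "pi / 3 \<le> \<omega>0" "\<omega>0 < pi / 2"
    and alpha: "(\<lambda>l. alpha_l \<theta> \<omega>0 lam n l) \<in> o(\<lambda>l. 1 / real l)"
    and gamma: "(\<lambda>l. gamma_l \<theta> \<omega>0 lam n l) \<in> o(\<lambda>l. 1)"
    and upi: "\<And>l. u_l \<theta> \<omega>0 lam n l pi \<noteq> 0"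
    and u0: "(INF l\<in>{l0..}. \<bar>u_l \<theta> \<omega>0 lam n l 0\<bar>) > 0"
  shows "(\<lambda>l. supC (\<lambda>\<omega>. deriv (m_l \<theta> \<omega>0 lam n l) \<omega> - deriv (meyer_mask \<theta> \<omega>0) \<omega>))
           \<in> O(\<lambda>l. mu_l \<theta> \<omega>0 lam n l)"
proof -
  obtain \<theta>' \<theta>'' where th: "\<forall>x. (\<theta> has_real_derivative \<theta>' x) (at x)"
    and th2: "\<forall>x. (\<theta>' has_real_derivative \<theta>'' x) (at x)" using C2 by blast
  have thd: "\<And>x. (\<theta> has_real_derivative \<theta>' x) (at x)" using th by blast
  have thc: "continuous_on UNIV \<theta>'"
    using th2 by (meson DERIV_continuous continuous_at_imp_continuous_on)
  obtain M where M: "M \<ge> 0" "\<And>x. \<bar>Dm \<theta> \<theta>' \<omega>0 x\<bar> \<le> M"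
    using Dm_bound[OF odd thd thc flat w0] by blast
  define d where "d = (INF l\<in>{l0..}. \<bar>u_l \<theta> \<omega>0 lam n l 0\<bar>)"
  have dpos: "d > 0" using u0 by (simp add: d_def)
  have du: "d \<le> \<bar>u_l \<theta> \<omega>0 lam n l 0\<bar>" if "l \<ge> l0" for l
    unfolding d_def by (rule cINF_lower) (use that in \<open>auto intro: bdd_belowI[of _ 0]\<close>)
  have "eventually (\<lambda>l. norm (supC (\<lambda>\<omega>. deriv (m_l \<theta> \<omega>0 lam n l) \<omega> - deriv (meyer_mask \<theta> \<omega>0) \<omega>))
          \<le> (5 + M) / d * norm (mu_l \<theta> \<omega>0 lam n l)) at_top"
  proof (rule eventually_at_top_linorderI[of "max l0 1"])
    fix l :: nat assume l: "l \<ge> max l0 1"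
    have h: "l \<ge> 1" "d \<le> \<bar>u_l \<theta> \<omega>0 lam n l 0\<bar>" using l du by auto
    have r1: "supC (\<lambda>\<omega>. deriv (m_l \<theta> \<omega>0 lam n l) \<omega> - deriv (meyer_mask \<theta> \<omega>0) \<omega>)
          \<le> (5 + M) / d * mu_l \<theta> \<omega>0 lam n l"
      by (rule main_bound(1)[where \<theta>'=\<theta>' and M=M]) (use odd thd thc flat w0 h dpos M in auto)
    have r2: "0 \<le> supC (\<lambda>\<omega>. deriv (m_l \<theta> \<omega>0 lam n l) \<omega> - deriv (meyer_mask \<theta> \<omega>0) \<omega>)"
      by (rule main_bound(2)[where \<theta>'=\<theta>' and M=M and d=d]) (use odd thd thc flat w0 h dpos M in auto)
    have r3: "0 \<le> mu_l \<theta> \<omega>0 lam n l"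
      by (rule main_bound(3)[where \<theta>'=\<theta>' and M=M and d=d]) (use odd thd thc flat w0 h dpos M in auto)
    show "norm (supC (\<lambda>\<omega>. deriv (m_l \<theta> \<omega>0 lam n l) \<omega> - deriv (meyer_mask \<theta> \<omega>0) \<omega>))
          \<le> (5 + M) / d * norm (mu_l \<theta> \<omega>0 lam n l)"
      using r1 r2 r3 by simp
  qed
  thus ?thesis by (rule bigoI)
qed

end
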